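(* Let $p\in(0,1)$, let $G=(V,E)$ be an undirected graph with $n=|V|$, $m=|E|$, and let $k$ be a nonnegative integer. Then $G$ has a cut of size at least $k$ (a partition $V=S\cup T$ with at least $k$ edges between $S$ and $T$) if and only if the $\ell_p$ QRJA instance $\mathcal I(G)$ has a solution of loss at most $n w_2+2(m-k)+k\,2^p$. Moreover, from any solution of $\mathcal I(G)$ with loss at most this value one can construct a cut of $G$ of size at least $k$.
   Context: An $\ell_p$ QRJA instance consists of candidates, judgments $(a,b,y)$ ("$a$ is better than $b$ by $y$") with nonnegative weights, and a solution $\mathbf x$ assigns a real number $x_a$ to each candidate $a$; its loss is $\sum w\,|x_a-x_b-y|^p$ summed over the weighted judgments $(a,b,y)$ with weight $w$. Construction of $\mathcal I(G)$: let $w_2=\frac{2n}{1-p}+1$ and $w_1=nw_2+1$. The candidates are $V\cup\{v^{(s)},v^{(t)}\}$ (two new candidates). The judgments are: $(v^{(t)},v^{(s)},1)$ with weight $w_1$; $(v^{(s)},u,0)$ with weight $w_2$ for each $u\in V$; $(v^{(t)},u,0)$ with weight $w_2$ for each $u\in V$; and both $(u,v,1)$ and $(v,u,1)$ with weight $1$ for each edge $\{u,v\}\in E$. *)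

theory Defs
  imports Complex_Main
begin

definition simple_graph :: "'a set \<Rightarrow> 'a set set \<Rightarrow> bool" where
  "simple_graph V E \<longleftrightarrow> finite V \<and> (\<forall>e\<in>E. \<exists>u v. e = {u, v} \<and> u \<noteq> v \<and> u \<in> V \<and> v \<in> V)"

definition cut_edges :: "'a set \<Rightarrow> 'a set set \<Rightarrow> 'a set \<Rightarrow> 'a set set" where
  "cut_edges V E S = {e \<in> E. \<exists>u v. e = {u, v} \<and> u \<in> S \<and> v \<in> V - S}"

definition has_cut_at_least :: "'a set \<Rightarrow> 'a set set \<Rightarrow> nat \<Rightarrow> bool" where
  "has_cut_at_least V E k \<longleftrightarrow> (\<exists>S. S \<subseteq> V \<and> card (cut_edges V E S) \<ge> k)"

text \<open>Candidates of I(G): the vertices of G plus two new candidates v^(s), v^(t).\<close>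
datatype 'a cand = Vtx 'a | Src | Snk

definition w2 :: "real \<Rightarrow> nat \<Rightarrow> real" where
  "w2 p n = 2 * real n / (1 - p) + 1"

definition w1 :: "real \<Rightarrow> nat \<Rightarrow> real" where
  "w1 p n = real n * w2 p n + 1"

definition jloss :: "real \<Rightarrow> ('c \<Rightarrow> real) \<Rightarrow> 'c \<Rightarrow> 'c \<Rightarrow> real \<Rightarrow> real" where
  "jloss p x a b y = \<bar>x a - x b - y\<bar> powr p"

text \<open>Loss of solution x for the l_p QRJA instance I(G). The two judgments (u,v,1), (v,u,1)
  of an edge {u,v} correspond to the two ordered pairs (u,v), (v,u) with {u,v} in E.\<close>
definition qrja_loss :: "real \<Rightarrow> 'a set \<Rightarrow> 'a set set \<Rightarrow> ('a cand \<Rightarrow> real) \<Rightarrow> real" where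
  "qrja_loss p V E x =
     w1 p (card V) * jloss p x Snk Src 1
     + (\<Sum>u\<in>V. w2 p (card V) * jloss p x Src (Vtx u) 0)
     + (\<Sum>u\<in>V. w2 p (card V) * jloss p x Snk (Vtx u) 0)
     + (\<Sum>(u, v)\<in>{(u, v). u \<in> V \<and> v \<in> V \<and> u \<noteq> v \<and> {u, v} \<in> E}. 1 * jloss p x (Vtx u) (Vtx v) 1)"

definition loss_bound :: "real \<Rightarrow> 'a set \<Rightarrow> 'a set set \<Rightarrow> nat \<Rightarrow> real" where
  "loss_bound p V E k = real (card V) * w2 p (card V) + 2 * (real (card E) - real k) + real k * 2 powr p"

end

theory Submission
  imports Defs "HOL-Analysis.Convex"
begin
lemma bern: fixes m p :: real assumes "0 \<le> m" "0 < p" "p < 1" shows "(1+m) powr p \<le> 1 + p*m"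
  using Youngs_inequality_0[of p "1-p" "1+m" 1] assms by (simp add: algebra_simps)

lemma le_powr_self: fixes x p :: real assumes "0 \<le> x" "x \<le> 1" "0 < p" "p \<le> 1" shows "x \<le> x powr p"
proof (cases "x = 0")
  case False
  then have "x powr 1 \<le> x powr p" using assms by (intro powr_mono') auto
  then show ?thesis using False assms by simp
qed simp

lemma keyK: fixes m M p :: real assumes "0 \<le> m" "m \<le> M" "0 < p" "p < 1"
  shows "(m+M) powr p \<le> M powr p + p * m powr p"
proof (cases "M = 0")
  case True then show ?thesis using assms by simp
next
  case False
  then have M: "M > 0" using assms by simp
  define r where "r = m / M"
  have r: "0 \<le> r" "r \<le> 1" using assms M by (auto simp: r_def)
  have "m + M = M * (1 + r)" using M by (simp add: r_def field_simps)
  then have "(m+M) powr p = M powr p * (1+r) powr p" using M r by (simp add: powr_mult)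
  also have "\<dots> \<le> M powr p * (1 + p * r)"
    using bern[OF r(1) assms(3,4)] by (intro mult_left_mono) auto
  also have "\<dots> = M powr p + p * (M powr p * r)" by (simp add: algebra_simps)
  also have "M powr p * r \<le> M powr p * r powr p"
    using le_powr_self[OF r assms(3)] assms by (intro mult_left_mono) auto
  also have "M powr p * r powr p = m powr p"
    using M r assms by (simp add: r_def powr_divide)
  finally show ?thesis using assms by (simp add: mult_left_mono)
qed

lemma subadd: fixes a b p :: real assumes "0 < p" "p < 1"
  shows "\<bar>a+b\<bar> powr p \<le> \<bar>a\<bar> powr p + \<bar>b\<bar> powr p"
proof -
  have "\<bar>a+b\<bar> powr p \<le> (\<bar>a\<bar>+\<bar>b\<bar>) powr p" using assms by (intro powr_mono2) auto
  also have "\<dots> \<le> \<bar>a\<bar> powr p + \<bar>b\<bar> powr p"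
  proof (cases "\<bar>a\<bar> \<le> \<bar>b\<bar>")
    case True
    then have "(\<bar>a\<bar>+\<bar>b\<bar>) powr p \<le> \<bar>b\<bar> powr p + p * \<bar>a\<bar> powr p" using keyK assms by simp
    also have "\<dots> \<le> \<bar>a\<bar> powr p + \<bar>b\<bar> powr p" using assms
      by (simp add: mult_left_le_one_le)
    finally show ?thesis .
  next
    case False
    then have "(\<bar>b\<bar>+\<bar>a\<bar>) powr p \<le> \<bar>a\<bar> powr p + p * \<bar>b\<bar> powr p" using keyK assms by simp
    also have "\<dots> \<le> \<bar>a\<bar> powr p + \<bar>b\<bar> powr p" using assms
      by (simp add: mult_left_le_one_le)
    finally show ?thesis by (simp add: add.commute)
  qed
  finally show ?thesis .
qed

lemma vertex: fixes s t y p :: real assumes "0 < p" "p < 1"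
  shows "1 - \<bar>t-s-1\<bar> powr p + (1-p) * (min \<bar>y-s\<bar> \<bar>t-y\<bar>) powr p
     \<le> \<bar>y-s\<bar> powr p + \<bar>t-y\<bar> powr p"
proof -
  define m where "m = min \<bar>y-s\<bar> \<bar>t-y\<bar>"
  define M where "M = max \<bar>y-s\<bar> \<bar>t-y\<bar>"
  have sum: "\<bar>y-s\<bar> powr p + \<bar>t-y\<bar> powr p = m powr p + M powr p"
    by (simp add: m_def M_def min_def max_def)
  have "1 = \<bar>(t-s) + (-(t-s-1))\<bar> powr p" by simp
  also have "\<dots> \<le> \<bar>t-s\<bar> powr p + \<bar>t-s-1\<bar> powr p" using subadd[OF assms, of "t-s" "-(t-s-1)"] by (simp add: abs_minus_commute)
  also have "\<bar>t-s\<bar> powr p \<le> (m+M) powr p"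
    using assms by (intro powr_mono2) (auto simp: m_def M_def min_def max_def)
  also have "(m+M) powr p \<le> M powr p + p * m powr p"
    using assms by (intro keyK) (auto simp: m_def M_def)
  finally show ?thesis unfolding sum m_def[symmetric] by (simp add: algebra_simps)
qed


lemma sum_swap_half:
  fixes F :: "'a \<Rightarrow> 'a \<Rightarrow> real"
  assumes "finite P" "\<And>u v. (u,v) \<in> P \<Longrightarrow> (v,u) \<in> P"
  shows "(\<Sum>(u,v)\<in>P. F u v) = (\<Sum>(u,v)\<in>P. (F u v + F v u) / 2)"
proof -
  have sw: "(\<Sum>(u,v)\<in>P. F v u) = (\<Sum>(u,v)\<in>P. F u v)"
    by (rule sum.reindex_bij_witness[where i=prod.swap and j=prod.swap]) (auto intro: assms(2))
  have "(\<Sum>(u,v)\<in>P. (F u v + F v u) / 2) = ((\<Sum>(u,v)\<in>P. F u v) + (\<Sum>(u,v)\<in>P. F v u)) / 2"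
    unfolding case_prod_unfold sum_divide_distrib[symmetric] sum.distrib by simp
  then show ?thesis using sw by simp
qed

definition Pset :: "'a set \<Rightarrow> 'a set set \<Rightarrow> ('a \<times> 'a) set" where
  "Pset V E = {(u, v). u \<in> V \<and> v \<in> V \<and> u \<noteq> v \<and> {u, v} \<in> E}"

lemma finite_Pset: "finite V \<Longrightarrow> finite (Pset V E)"
  by (rule finite_subset[of _ "V \<times> V"]) (auto simp: Pset_def)

lemma finite_E: "simple_graph V E \<Longrightarrow> finite E"
  unfolding simple_graph_def
  by (rule finite_subset[of _ "Pow V"]) auto

lemma sum_Pset_E:
  assumes "simple_graph V E"
  shows "(\<Sum>(u,v)\<in>Pset V E. h {u,v}) = 2 * (\<Sum>e\<in>E. (h e :: real))"
proof -
  have fV: "finite V" using assms by (simp add: simple_graph_def)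
  have img: "(\<lambda>(u,v). {u,v}) ` Pset V E \<subseteq> E" by (auto simp: Pset_def)
  have "(\<Sum>(u,v)\<in>Pset V E. h {u,v}) =
     (\<Sum>e\<in>E. \<Sum>x\<in>{x. x \<in> Pset V E \<and> (\<lambda>(u,v). {u,v}) x = e}. h ((\<lambda>(u,v). {u,v}) x))"
    using sum.group[OF finite_Pset[OF fV] finite_E[OF assms] img, of "\<lambda>x. h ((\<lambda>(u,v). {u,v}) x)"]
    by (simp add: case_prod_unfold)
  also have "\<dots> = (\<Sum>e\<in>E. 2 * h e)"
  proof (rule sum.cong[OF refl])
    fix e assume e: "e \<in> E"
    then obtain a b where ab: "e = {a,b}" "a \<noteq> b" "a \<in> V" "b \<in> V"
      using assms unfolding simple_graph_def by blast
    have "{x. x \<in> Pset V E \<and> (\<lambda>(u,v). {u,v}) x = e} = {(a,b),(b,a)}"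
      using ab e by (auto simp: Pset_def doubleton_eq_iff insert_commute)
    then show "(\<Sum>x\<in>{x. x \<in> Pset V E \<and> (\<lambda>(u,v). {u,v}) x = e}. h ((\<lambda>(u,v). {u,v}) x)) = 2 * h e"
      using ab by (simp add: insert_commute)
  qed
  finally show ?thesis by (simp add: sum_distrib_left)
qed

lemma cut_iff:
  assumes "S \<subseteq> V" "u \<in> V" "v \<in> V" "{u,v} \<in> E"
  shows "{u,v} \<in> cut_edges V E S \<longleftrightarrow> (u \<in> S \<and> v \<notin> S) \<or> (v \<in> S \<and> u \<notin> S)"
  using assms unfolding cut_edges_def by (auto simp: doubleton_eq_iff)

lemma sum_E_cut:
  assumes "finite E"
  shows "(\<Sum>e\<in>E. if e \<in> cut_edges V E S then 2 powr p else 2)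
        = real (card (cut_edges V E S)) * 2 powr p + 2 * (real (card E) - real (card (cut_edges V E S)))"
proof -
  have sub: "cut_edges V E S \<subseteq> E" by (auto simp: cut_edges_def)
  have "(\<Sum>e\<in>E. if e \<in> cut_edges V E S then 2 powr p else 2)
       = (\<Sum>e\<in>E \<inter> {e. e \<in> cut_edges V E S}. 2 powr p) + (\<Sum>e\<in>E \<inter> - {e. e \<in> cut_edges V E S}. (2::real))"
    using assms by (rule sum.If_cases)
  also have "E \<inter> {e. e \<in> cut_edges V E S} = cut_edges V E S" using sub by auto
  also have "E \<inter> - {e. e \<in> cut_edges V E S} = E - cut_edges V E S" by auto
  finally show ?thesis using sub assms
    by (simp add: card_Diff_subset finite_subset of_nat_diff card_mono)
qed


lemma qrja_loss_P:
  "qrja_loss p V E x =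
     w1 p (card V) * \<bar>x Snk - x Src - 1\<bar> powr p
     + (\<Sum>u\<in>V. w2 p (card V) * (\<bar>x Src - x (Vtx u)\<bar> powr p + \<bar>x Snk - x (Vtx u)\<bar> powr p))
     + (\<Sum>(u, v)\<in>Pset V E. \<bar>x (Vtx u) - x (Vtx v) - 1\<bar> powr p)"
  unfolding qrja_loss_def jloss_def Pset_def
  by (simp add: sum.distrib distrib_left)

lemma lower_bound:
  fixes p :: real and V :: "'a set" and E :: "'a set set" and x :: "'a cand \<Rightarrow> real"
  assumes p: "0 < p" "p < 1" and G: "simple_graph V E"
  defines "S \<equiv> {u \<in> V. \<bar>x (Vtx u) - x Src\<bar> \<le> \<bar>x Snk - x (Vtx u)\<bar>}"
  shows "real (card V) * w2 p (card V)
           + (\<Sum>e\<in>E. if e \<in> cut_edges V E S then 2 powr p else 2) \<le> qrja_loss p V E x"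
proof -
  define s where "s = x Src"
  define t where "t = x Snk"
  define y where "y = (\<lambda>u. x (Vtx u))"
  define n where "n = card V"
  define W where "W = w2 p n"
  define A where "A = \<bar>t - s - 1\<bar> powr p"
  define d where "d = (\<lambda>u. (min \<bar>y u - s\<bar> \<bar>t - y u\<bar>) powr p)"
  define SD where "SD = (\<Sum>u\<in>V. d u)"
  define g where "g = (\<lambda>e. if e \<in> cut_edges V E S then 2 powr p else (2::real))"
  define F where "F = (\<lambda>u v. \<bar>y u - y v - 1\<bar> powr p)"
  have fV: "finite V" using G by (simp add: simple_graph_def)
  have SV: "S \<subseteq> V" by (auto simp: S_def)
  have d0: "\<And>u. 0 \<le> d u" by (simp add: d_def)
  have A0: "0 \<le> A" by (simp add: A_def)
  have SD0: "0 \<le> SD" unfolding SD_def using d0 by (simp add: sum_nonneg)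
  have dS: "\<And>u. u \<in> S \<Longrightarrow> d u = \<bar>y u - s\<bar> powr p"
    by (auto simp: d_def S_def y_def s_def t_def min_def)
  have dT: "\<And>u. u \<in> V \<Longrightarrow> u \<notin> S \<Longrightarrow> d u = \<bar>t - y u\<bar> powr p"
    by (auto simp: d_def S_def y_def s_def t_def min_def)
  have diff: "\<bar>y u - y v\<bar> powr p \<le> d u + d v"
    if "u \<in> V" "v \<in> V" "(u \<in> S \<and> v \<in> S) \<or> (u \<notin> S \<and> v \<notin> S)" for u v
  proof (cases "u \<in> S")
    case True
    then have "v \<in> S" using that by auto
    have "\<bar>(y u - s) + (-(y v - s))\<bar> powr p \<le> \<bar>y u - s\<bar> powr p + \<bar>-(y v - s)\<bar> powr p"
      by (rule subadd[OF p])
    then show ?thesis using dS[OF True] dS[OF \<open>v \<in> S\<close>] by (simp add: abs_minus_commute)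
  next
    case False
    then have "v \<notin> S" using that by auto
    have "\<bar>(-(t - y u)) + (t - y v)\<bar> powr p \<le> \<bar>-(t - y u)\<bar> powr p + \<bar>t - y v\<bar> powr p"
      by (rule subadd[OF p])
    then show ?thesis using dT[OF that(1) False] dT[OF that(2) \<open>v \<notin> S\<close>] by (simp add: abs_minus_commute)
  qed
  have one: "1 - \<bar>y u - y v\<bar> powr p \<le> F u v" for u v
  proof -
    have "\<bar>(-(y u - y v - 1)) + (y u - y v)\<bar> powr p \<le> \<bar>-(y u - y v - 1)\<bar> powr p + \<bar>y u - y v\<bar> powr p"
      by (rule subadd[OF p])
    then show ?thesis by (simp add: F_def abs_minus_commute)
  qed
  have pair: "g {u,v} / 2 - d u - d v \<le> (F u v + F v u) / 2" if uv: "(u,v) \<in> Pset V E" for u v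
  proof -
    have uvV: "u \<in> V" "v \<in> V" "{u,v} \<in> E" using uv by (auto simp: Pset_def)
    show ?thesis
    proof (cases "{u,v} \<in> cut_edges V E S")
      case True
      have "\<bar>(-(y u - y v - 1)) + (-(y v - y u - 1))\<bar> powr p \<le> \<bar>-(y u - y v - 1)\<bar> powr p + \<bar>-(y v - y u - 1)\<bar> powr p"
        by (rule subadd[OF p])
      then have "2 powr p \<le> F u v + F v u" by (simp add: F_def abs_minus_commute)
      then show ?thesis using True d0[of u] d0[of v] by (simp add: g_def)
    next
      case False
      then have same: "(u \<in> S \<and> v \<in> S) \<or> (u \<notin> S \<and> v \<notin> S)"
        using cut_iff[OF SV uvV] by auto
      have a: "1 - (d u + d v) \<le> F u v" using one[of u v] diff[OF uvV(1,2) same] by linarith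
      have "\<bar>y v - y u\<bar> powr p = \<bar>y u - y v\<bar> powr p" by (simp add: abs_minus_commute)
      then have b: "1 - (d u + d v) \<le> F v u" using one[of v u] diff[OF uvV(1,2) same] by linarith
      show ?thesis using a b False by (simp add: g_def)
    qed
  qed
  have fP: "finite (Pset V E)" using finite_Pset[OF fV] .
  have symP: "\<And>u v. (u,v) \<in> Pset V E \<Longrightarrow> (v,u) \<in> Pset V E" by (auto simp: Pset_def insert_commute)
  have edges: "(\<Sum>e\<in>E. g e) - 2 * real n * SD \<le> (\<Sum>(u, v)\<in>Pset V E. F u v)"
  proof -
    have "(\<Sum>(u, v)\<in>Pset V E. F u v) = (\<Sum>(u, v)\<in>Pset V E. (F u v + F v u) / 2)"
      by (rule sum_swap_half[OF fP symP])
    also have "\<dots> \<ge> (\<Sum>(u, v)\<in>Pset V E. g {u,v} / 2 - (d u + d v))"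
    proof (rule sum_mono)
      fix z assume "z \<in> Pset V E"
      then obtain a b where z: "z = (a,b)" "(a,b) \<in> Pset V E" by (cases z) auto
      show "(case z of (u, v) \<Rightarrow> g {u,v} / 2 - (d u + d v)) \<le> (case z of (u, v) \<Rightarrow> (F u v + F v u) / 2)"
        using pair[OF z(2)] z(1) by simp
    qed
    finally have 1: "(\<Sum>(u, v)\<in>Pset V E. g {u,v} / 2 - (d u + d v)) \<le> (\<Sum>(u, v)\<in>Pset V E. F u v)" .
    have 2: "(\<Sum>(u, v)\<in>Pset V E. g {u,v} / 2 - (d u + d v))
        = (\<Sum>(u, v)\<in>Pset V E. g {u,v}) / 2 - (\<Sum>(u, v)\<in>Pset V E. d u + d v)"
      by (simp add: case_prod_unfold sum_subtractf sum_divide_distrib)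
    have 3: "(\<Sum>(u, v)\<in>Pset V E. g {u,v}) = 2 * (\<Sum>e\<in>E. g e)"
      using sum_Pset_E[OF G] .
    have 4: "(\<Sum>(u, v)\<in>Pset V E. d u + d v) \<le> (\<Sum>(u, v)\<in>V \<times> V. d u + d v)"
      by (rule sum_mono2) (auto simp: Pset_def fV intro: add_nonneg_nonneg d0)
    have 5: "(\<Sum>(u, v)\<in>V \<times> V. d u + d v) = 2 * real n * SD"
    proof -
      have "(\<Sum>(u, v)\<in>V \<times> V. d u + d v) = (\<Sum>u\<in>V. \<Sum>v\<in>V. d u + d v)"
        by (simp add: sum.cartesian_product)
      also have "\<dots> = (\<Sum>u\<in>V. real n * d u + SD)"
        by (simp add: sum.distrib SD_def n_def)
      also have "\<dots> = 2 * real n * SD"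
        by (simp add: sum.distrib SD_def n_def sum_distrib_left[symmetric])
      finally show ?thesis .
    qed
    show ?thesis using 1 2 3 4 5 by linarith
  qed
  have vert: "\<And>u. 1 - A + (1-p) * d u \<le> \<bar>s - y u\<bar> powr p + \<bar>t - y u\<bar> powr p"
    using vertex[OF p] by (simp add: A_def d_def abs_minus_commute)
  have verts: "W * (real n - real n * A + (1-p) * SD)
      \<le> (\<Sum>u\<in>V. W * (\<bar>s - y u\<bar> powr p + \<bar>t - y u\<bar> powr p))"
  proof -
    have "(\<Sum>u\<in>V. W * (1 - A + (1-p) * d u)) \<le> (\<Sum>u\<in>V. W * (\<bar>s - y u\<bar> powr p + \<bar>t - y u\<bar> powr p))"
      using vert p by (intro sum_mono mult_left_mono) (auto simp: W_def w2_def)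
    moreover have "(\<Sum>u\<in>V. W * (1 - A + (1-p) * d u)) = W * (real n - real n * A + (1-p) * SD)"
      by (simp add: sum_distrib_left[symmetric] sum.distrib sum_subtractf SD_def n_def
          algebra_simps)
    ultimately show ?thesis by simp
  qed
  have W1: "W * (1 - p) = 2 * real n + (1 - p)" using p by (simp add: W_def w2_def field_simps)
  have w1e: "w1 p n = real n * W + 1" by (simp add: w1_def W_def)
  have L: "qrja_loss p V E x = w1 p n * A + (\<Sum>u\<in>V. W * (\<bar>s - y u\<bar> powr p + \<bar>t - y u\<bar> powr p))
      + (\<Sum>(u, v)\<in>Pset V E. F u v)"
    unfolding qrja_loss_P by (simp add: A_def W_def n_def s_def t_def y_def F_def)
  have expand0: "W * (real n - real n * A + (1-p) * SD) = real n * W - real n * W * A + (W * (1-p)) * SD"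
    by (simp add: algebra_simps)
  have expand: "W * (real n - real n * A + (1-p) * SD) = real n * W - real n * W * A + 2 * real n * SD + (1-p) * SD"
    unfolding expand0 W1 by (simp add: distrib_right)
  have w1A: "w1 p n * A = real n * W * A + A" unfolding w1e by (simp add: distrib_right)
  have "real n * W + (\<Sum>e\<in>E. g e) \<le> qrja_loss p V E x"
  proof -
    have "(1-p) * SD \<ge> 0" using p SD0 by simp
    then show ?thesis using L verts edges expand w1A A0 by linarith
  qed
  then show ?thesis by (simp add: n_def W_def g_def)
qed


lemma upper:
  fixes p :: real and V :: "'a set" and E :: "'a set set"
  assumes p: "0 < p" "p < 1" and G: "simple_graph V E" and SV: "S \<subseteq> V"
  defines "x \<equiv> (\<lambda>c. case c of Vtx u \<Rightarrow> if u \<in> S then 0 else 1 | Src \<Rightarrow> 0 | Snk \<Rightarrow> (1::real))"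
  shows "qrja_loss p V E x = real (card V) * w2 p (card V)
           + (\<Sum>e\<in>E. if e \<in> cut_edges V E S then 2 powr p else 2)"
proof -
  define g where "g = (\<lambda>e. if e \<in> cut_edges V E S then 2 powr p else (2::real))"
  define F where "F = (\<lambda>u v. \<bar>x (Vtx u) - x (Vtx v) - 1\<bar> powr p)"
  have fV: "finite V" using G by (simp add: simple_graph_def)
  have fP: "finite (Pset V E)" using finite_Pset[OF fV] .
  have symP: "\<And>u v. (u,v) \<in> Pset V E \<Longrightarrow> (v,u) \<in> Pset V E" by (auto simp: Pset_def insert_commute)
  have A: "\<bar>x Snk - x Src - 1\<bar> powr p = 0" by (simp add: x_def)
  have vt: "\<And>u. \<bar>x Src - x (Vtx u)\<bar> powr p + \<bar>x Snk - x (Vtx u)\<bar> powr p = 1"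
    by (simp add: x_def)
  have pair: "(F u v + F v u) / 2 = g {u,v} / 2" if uv: "(u,v) \<in> Pset V E" for u v
  proof -
    have uvV: "u \<in> V" "v \<in> V" "{u,v} \<in> E" using uv by (auto simp: Pset_def)
    show ?thesis using cut_iff[OF SV uvV] by (auto simp: F_def g_def x_def)
  qed
  have "(\<Sum>(u, v)\<in>Pset V E. F u v) = (\<Sum>(u, v)\<in>Pset V E. (F u v + F v u) / 2)"
    by (rule sum_swap_half[OF fP symP])
  also have "\<dots> = (\<Sum>(u, v)\<in>Pset V E. g {u,v} / 2)"
  proof (rule sum.cong[OF refl])
    fix z assume "z \<in> Pset V E"
    then obtain a b where z: "z = (a,b)" "(a,b) \<in> Pset V E" by (cases z) auto
    show "(case z of (u, v) \<Rightarrow> (F u v + F v u) / 2) = (case z of (u, v) \<Rightarrow> g {u,v} / 2)"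
      using pair[OF z(2)] z(1) by simp
  qed
  also have "\<dots> = (\<Sum>(u, v)\<in>Pset V E. g {u,v}) / 2"
    by (simp add: case_prod_unfold sum_divide_distrib)
  also have "\<dots> = (\<Sum>e\<in>E. g e)" using sum_Pset_E[OF G, of g] by simp
  finally have ES: "(\<Sum>(u, v)\<in>Pset V E. F u v) = (\<Sum>e\<in>E. g e)" .
  show ?thesis unfolding qrja_loss_P A vt ES[unfolded F_def] by (simp add: g_def)
qed

theorem mainTheorem7:
  fixes p :: real and V :: "'a set" and E :: "'a set set" and k :: nat
  assumes "0 < p" and "p < 1" and "simple_graph V E"
  shows "(has_cut_at_least V E k \<longleftrightarrow> (\<exists>x. qrja_loss p V E x \<le> loss_bound p V E k))
       \<and> (\<forall>x. qrja_loss p V E x \<le> loss_bound p V E k \<longrightarrow>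
             (\<exists>S. S \<subseteq> V \<and> card (cut_edges V E S) \<ge> k))"
proof -
  note p = assms(1,2) and G = assms(3)
  have fE: "finite E" using finite_E[OF G] .
  have q2: "2 powr p < 2" using p powr_less_mono[of p 1 2] by simp
  have bck: "\<exists>S. S \<subseteq> V \<and> card (cut_edges V E S) \<ge> k"
    if h: "qrja_loss p V E x \<le> loss_bound p V E k" for x
  proof -
    define S where "S = {u \<in> V. \<bar>x (Vtx u) - x Src\<bar> \<le> \<bar>x Snk - x (Vtx u)\<bar>}"
    have SV: "S \<subseteq> V" by (auto simp: S_def)
    have lb: "real (card V) * w2 p (card V)
           + (\<Sum>e\<in>E. if e \<in> cut_edges V E S then 2 powr p else 2) \<le> qrja_loss p V E x"
      unfolding S_def by (rule lower_bound[OF p G])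
    define c where "c = real (card (cut_edges V E S))"
    define q where "q = (2::real) powr p"
    have "c * q + 2 * (real (card E) - c) \<le> 2 * (real (card E) - real k) + real k * q"
      using lb h unfolding sum_E_cut[OF fE] loss_bound_def c_def q_def by linarith
    moreover have eq: "(real k - c) * (2 - q) = 2 * real k - real k * q - 2 * c + c * q"
      by (simp add: algebra_simps)
    ultimately have le: "(real k - c) * (2 - q) \<le> 0" by (smt (verit))
    have "2 - q > 0" using q2 by (simp add: q_def)
    have "real k \<le> c"
    proof (rule ccontr)
      assume "\<not> real k \<le> c"
      then have "(real k - c) * (2 - q) > 0" using \<open>2 - q > 0\<close> by (intro mult_pos_pos) auto
      then show False using le by linarith
    qed
    then show ?thesis using SV by (auto simp: c_def)
  qed
  have fwdd: "\<exists>x. qrja_loss p V E x \<le> loss_bound p V E k" if "has_cut_at_least V E k"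
  proof -
    have "\<exists>S. S \<subseteq> V \<and> card (cut_edges V E S) \<ge> k"
      using that by (simp only: has_cut_at_least_def)
    then obtain S where S: "S \<subseteq> V" "card (cut_edges V E S) \<ge> k" by (elim exE conjE)
    obtain x where L: "qrja_loss p V E x = real (card V) * w2 p (card V)
           + (\<Sum>e\<in>E. if e \<in> cut_edges V E S then 2 powr p else 2)"
      using upper[OF p G S(1)] by (rule that)
    define c where "c = real (card (cut_edges V E S))"
    define q where "q = (2::real) powr p"
    have c1: "0 \<le> c - real k" using S(2) unfolding c_def by simp
    have c2: "q - 2 \<le> 0" using q2 unfolding q_def by simp
    have "(c - real k) * (q - 2) \<le> 0" using mult_nonneg_nonpos[OF c1 c2] .
    moreover have "(c - real k) * (q - 2) = c * q - 2 * c - real k * q + 2 * real k"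
      by (simp add: algebra_simps)
    ultimately have "c * q + 2 * (real (card E) - c) \<le> 2 * (real (card E) - real k) + real k * q"
      by (smt (verit))
    moreover have "qrja_loss p V E x = real (card V) * w2 p (card V) + (c * q + 2 * (real (card E) - c))"
      unfolding L sum_E_cut[OF fE] c_def q_def by simp
    moreover have "loss_bound p V E k = real (card V) * w2 p (card V) + 2 * (real (card E) - real k) + real k * q"
      unfolding loss_bound_def q_def by simp
    ultimately have "qrja_loss p V E x \<le> loss_bound p V E k" by linarith
    then show ?thesis by blast
  qed
  show ?thesis
  proof (intro conjI iffI allI impI)
    show "has_cut_at_least V E k \<Longrightarrow> \<exists>x. qrja_loss p V E x \<le> loss_bound p V E k" by (rule fwdd)
  next
    assume "\<exists>x. qrja_loss p V E x \<le> loss_bound p V E k"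
    then obtain x where "qrja_loss p V E x \<le> loss_bound p V E k" by blast
    then show "has_cut_at_least V E k" using bck unfolding has_cut_at_least_def by blast
  next
    fix x assume "qrja_loss p V E x \<le> loss_bound p V E k"
    then show "\<exists>S. S \<subseteq> V \<and> k \<le> card (cut_edges V E S)" by (rule bck)
  qed
qed

end
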